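(* Let $\mathcal{H}$ be a complex Hilbert space, let $A\in\mathcal{B}(\mathcal{H})$ be a nonzero positive operator, and let $\mathbb{A}=\begin{pmatrix}A&O\\O&A\end{pmatrix}$ on $\mathcal{H}\oplus\mathcal{H}$. Let $T,S\in\mathcal{B}_{A^{1/2}}(\mathcal{H})$. Then (i) $\omega_{\mathbb{A}}\left[\begin{pmatrix}T&S\\S&T\end{pmatrix}\right]=\max\{\omega_A(T+S),\omega_A(T-S)\}$; (ii) $\omega_{\mathbb{A}}\left[\begin{pmatrix}T&-S\\S&T\end{pmatrix}\right]=\max\{\omega_A(T+iS),\omega_A(T-iS)\}$.
   Context: For a positive operator $A$ on $\mathcal{H}$, $\langle x,y\rangle_A:=\langle Ax,y\rangle$ and $\|x\|_A:=\sqrt{\langle x,x\rangle_A}$. $\mathcal{B}_{A^{1/2}}(\mathcal{H})$ is the set of $T\in\mathcal{B}(\mathcal{H})$ such that $\|Tx\|_A\le\lambda\|x\|_A$ for some $\lambda>0$ and all $x\in\mathcal{H}$. For such $T$, $\omega_A(T):=\sup\{|\langle Tx,x\rangle_A|:x\in\mathcal{H},\|x\|_A=1\}$. $\omega_{\mathbb{A}}$ is defined the same way on $\mathcal{H}\oplus\mathcal{H}$ with the positive operator $\mathbb{A}$, i.e. $\langle (x_1,x_2),(y_1,y_2)\rangle_{\mathbb{A}}=\langle x_1,y_1\rangle_A+\langle x_2,y_2\rangle_A$. *)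

theory Defs
  imports "HOL-Analysis.Analysis"
begin

text \<open>The inner product is linear in the first and conjugate-linear in the second argument.\<close>

class complex_inner = real_normed_vector +
  fixes scaleC :: "complex \<Rightarrow> 'a \<Rightarrow> 'a" (infixr \<open>*\<^sub>C\<close> 75)
    and cinner :: "'a \<Rightarrow> 'a \<Rightarrow> complex"
  assumes scaleR_scaleC: "scaleR r x = scaleC (complex_of_real r) x"
    and scaleC_add_right: "scaleC a (x + y) = scaleC a x + scaleC a y"
    and scaleC_add_left: "scaleC (a + b) x = scaleC a x + scaleC b x"
    and scaleC_scaleC: "scaleC a (scaleC b x) = scaleC (a * b) x"
    and scaleC_one: "scaleC 1 x = x"
    and cinner_commute: "cinner x y = cnj (cinner y x)"
    and cinner_add_left: "cinner (x + y) z = cinner x z + cinner y z"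
    and cinner_scaleC_left: "cinner (scaleC c x) y = c * cinner x y"
    and cinner_ge_zero: "0 \<le> Re (cinner x x)"
    and cinner_eq_zero_iff: "cinner x x = 0 \<longleftrightarrow> x = 0"
    and norm_eq_sqrt_cinner: "norm x = sqrt (Re (cinner x x))"

class chilbert_space = complex_inner + complete_space

definition bounded_clinear :: "('a::complex_inner \<Rightarrow> 'b::complex_inner) \<Rightarrow> bool" where
  "bounded_clinear f \<longleftrightarrow>
     (\<forall>x y. f (x + y) = f x + f y) \<and> (\<forall>c x. f (c *\<^sub>C x) = c *\<^sub>C f x) \<and>
     (\<exists>K. \<forall>x. norm (f x) \<le> norm x * K)"

definition positive_op :: "('a::complex_inner \<Rightarrow> 'a) \<Rightarrow> bool" where
  "positive_op A \<longleftrightarrow> bounded_clinear A \<and>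
     (\<forall>x. Im (cinner (A x) x) = 0 \<and> 0 \<le> Re (cinner (A x) x))"

definition A_inner :: "('a::complex_inner \<Rightarrow> 'a) \<Rightarrow> 'a \<Rightarrow> 'a \<Rightarrow> complex" where
  "A_inner A x y = cinner (A x) y"

definition A_norm :: "('a::complex_inner \<Rightarrow> 'a) \<Rightarrow> 'a \<Rightarrow> real" where
  "A_norm A x = sqrt (Re (A_inner A x x))"

definition B_A_half :: "('a::complex_inner \<Rightarrow> 'a) \<Rightarrow> ('a \<Rightarrow> 'a) set" where
  "B_A_half A = {T. bounded_clinear T \<and> (\<exists>c>0. \<forall>x. A_norm A (T x) \<le> c * A_norm A x)}"

definition omega_A :: "('a::complex_inner \<Rightarrow> 'a) \<Rightarrow> ('a \<Rightarrow> 'a) \<Rightarrow> real" where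
  "omega_A A T = Sup {cmod (A_inner A (T x) x) | x. A_norm A x = 1}"

text \<open>The operator \<A> = diag(A,A) on H \<oplus> H (pairs), with its semi-inner product
  \<langle>(x1,x2),(y1,y2)\<rangle>_\<A> = \<langle>x1,y1\<rangle>_A + \<langle>x2,y2\<rangle>_A.\<close>
definition AA_inner :: "('a::complex_inner \<Rightarrow> 'a) \<Rightarrow> 'a \<times> 'a \<Rightarrow> 'a \<times> 'a \<Rightarrow> complex" where
  "AA_inner A p q = A_inner A (fst p) (fst q) + A_inner A (snd p) (snd q)"

definition AA_norm :: "('a::complex_inner \<Rightarrow> 'a) \<Rightarrow> 'a \<times> 'a \<Rightarrow> real" where
  "AA_norm A p = sqrt (Re (AA_inner A p p))"

definition omega_AA :: "('a::complex_inner \<Rightarrow> 'a) \<Rightarrow> ('a \<times> 'a \<Rightarrow> 'a \<times> 'a) \<Rightarrow> real" where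
  "omega_AA A M = Sup {cmod (AA_inner A (M p) p) | p. AA_norm A p = 1}"

definition block_op :: "('a::complex_inner \<Rightarrow> 'a) \<Rightarrow> ('a \<Rightarrow> 'a) \<Rightarrow> ('a \<Rightarrow> 'a) \<Rightarrow> ('a \<Rightarrow> 'a)
    \<Rightarrow> 'a \<times> 'a \<Rightarrow> 'a \<times> 'a" where
  "block_op P Q R S p = (P (fst p) + Q (snd p), R (fst p) + S (snd p))"

end

theory Submission imports Defs begin

lemma cinner_add_right: "cinner x (y + z) = cinner x y + cinner x z"
  by (metis cinner_commute cinner_add_left complex_cnj_add)

lemma cinner_scaleC_right: "cinner x (c *\<^sub>C y) = cnj c * cinner x y"
  by (metis cinner_commute cinner_scaleC_left complex_cnj_mult complex_cnj_cnj)

lemma scaleC_minus1: "- x = (-1) *\<^sub>C x"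
  by (metis scaleR_scaleC scaleR_minus1_left of_real_minus of_real_1)

lemma diff_scaleC: "x - y = x + (-1) *\<^sub>C y"
  by (simp add: scaleC_minus1[symmetric])

lemma pos_add: "positive_op A \<Longrightarrow> A (x + y) = A x + A y"
  unfolding positive_op_def bounded_clinear_def by blast
lemma pos_scale: "positive_op A \<Longrightarrow> A (c *\<^sub>C x) = c *\<^sub>C A x"
  unfolding positive_op_def bounded_clinear_def by blast

lemma f_add_left: "positive_op A \<Longrightarrow> A_inner A (a + b) c = A_inner A a c + A_inner A b c"
  by (simp add: A_inner_def pos_add cinner_add_left)
lemma f_add_right: "A_inner A c (a + b) = A_inner A c a + A_inner A c b"
  by (simp add: A_inner_def cinner_add_right)
lemma f_scale_left: "positive_op A \<Longrightarrow> A_inner A (k *\<^sub>C a) b = k * A_inner A a b"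
  by (simp add: A_inner_def pos_scale cinner_scaleC_left)
lemma f_scale_right: "A_inner A a (k *\<^sub>C b) = cnj k * A_inner A a b"
  by (simp add: A_inner_def cinner_scaleC_right)

lemma f_Im: "positive_op A \<Longrightarrow> Im (A_inner A x x) = 0"
  by (simp add: positive_op_def A_inner_def)
lemma f_Re: "positive_op A \<Longrightarrow> 0 \<le> Re (A_inner A x x)"
  by (simp add: positive_op_def A_inner_def)

lemmas fsimps = f_add_left f_add_right f_scale_left f_scale_right

lemma herm:
  assumes pos: "positive_op A"
  shows "A_inner A a b = cnj (A_inner A b a)"
proof -
  have 1: "Im (A_inner A (a + b) (a + b)) = 0" by (rule f_Im[OF pos])
  have 2: "Im (A_inner A (a + \<i> *\<^sub>C b) (a + \<i> *\<^sub>C b)) = 0" by (rule f_Im[OF pos])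
  have ia: "Im (A_inner A a a) = 0" "Im (A_inner A b b) = 0" using f_Im[OF pos] by auto
  from 1 have "Im (A_inner A a b) + Im (A_inner A b a) = 0"
    using ia by (simp add: fsimps pos)
  moreover from 2 have "Re (A_inner A b a) - Re (A_inner A a b) = 0"
    using ia by (simp add: fsimps pos)
  ultimately show ?thesis by (simp add: complex_eq_iff)
qed

lemma amgm:
  assumes pos: "positive_op A"
  shows "2 * cmod (A_inner A a b) \<le> Re (A_inner A a a) + Re (A_inner A b b)"
proof (cases "A_inner A a b = 0")
  case True
  then show ?thesis using f_Re[OF pos, of a] f_Re[OF pos, of b] by simp
next
  case False
  define \<alpha> where "\<alpha> = A_inner A a b"
  define t where "t = \<alpha> / complex_of_real (cmod \<alpha>)"
  have hb: "A_inner A b a = cnj \<alpha>" unfolding \<alpha>_def by (metis herm pos)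
  have e: "A_inner A (a + (-t) *\<^sub>C b) (a + (-t) *\<^sub>C b)
     = A_inner A a a - cnj t * \<alpha> - t * cnj \<alpha> + t * cnj t * A_inner A b b"
    by (simp add: fsimps pos hb \<alpha>_def[symmetric] algebra_simps)
  have n0: "cmod \<alpha> \<noteq> 0" using False \<alpha>_def by simp
  have sq: "\<alpha> * cnj \<alpha> = complex_of_real (cmod \<alpha>) * complex_of_real (cmod \<alpha>)"
    by (metis complex_norm_square of_real_mult power2_eq_square)
  have c1: "cnj t * \<alpha> = complex_of_real (cmod \<alpha>)"
    unfolding t_def using n0 sq by (simp add: field_simps mult.commute)
  have c2: "t * cnj \<alpha> = complex_of_real (cmod \<alpha>)"
    using c1 by (metis complex_cnj_cnj complex_cnj_mult complex_cnj_complex_of_real)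
  have c3: "t * cnj t = 1"
  proof -
    from sq show ?thesis unfolding t_def using n0 by (simp add: field_simps)
  qed
  have "0 \<le> Re (A_inner A (a + (-t) *\<^sub>C b) (a + (-t) *\<^sub>C b))" by (rule f_Re[OF pos])
  also have "\<dots> = Re (A_inner A a a) - 2 * cmod \<alpha> + Re (A_inner A b b)"
    unfolding e c1 c2 c3 by simp
  finally show ?thesis unfolding \<alpha>_def by simp
qed

lemma amgm_s:
  assumes pos: "positive_op A" and s: "s > 0"
  shows "2 * cmod (A_inner A a b) \<le> s\<^sup>2 * Re (A_inner A a a) + Re (A_inner A b b) / s\<^sup>2"
proof -
  have "2 * cmod (A_inner A (complex_of_real s *\<^sub>C a) (complex_of_real (1/s) *\<^sub>C b))
     \<le> Re (A_inner A (complex_of_real s *\<^sub>C a) (complex_of_real s *\<^sub>C a))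
       + Re (A_inner A (complex_of_real (1/s) *\<^sub>C b) (complex_of_real (1/s) *\<^sub>C b))"
    by (rule amgm[OF pos])
  moreover have "A_inner A (complex_of_real s *\<^sub>C a) (complex_of_real (1/s) *\<^sub>C b) = A_inner A a b"
    using s by (simp add: fsimps pos)
  moreover have "Re (A_inner A (complex_of_real s *\<^sub>C a) (complex_of_real s *\<^sub>C a)) = s\<^sup>2 * Re (A_inner A a a)"
    by (simp add: fsimps pos power2_eq_square)
  moreover have "Re (A_inner A (complex_of_real (1/s) *\<^sub>C b) (complex_of_real (1/s) *\<^sub>C b)) = Re (A_inner A b b) / s\<^sup>2"
    by (simp add: fsimps pos power2_eq_square)
  ultimately show ?thesis by simp
qed

lemma zero_right:
  assumes pos: "positive_op A" and z: "Re (A_inner A b b) = 0"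
  shows "A_inner A a b = 0"
proof (rule ccontr)
  assume "A_inner A a b \<noteq> 0"
  then have m: "cmod (A_inner A a b) > 0" by simp
  define R where "R = Re (A_inner A a a)"
  have R: "R \<ge> 0" unfolding R_def by (rule f_Re[OF pos])
  define s where "s = sqrt (cmod (A_inner A a b) / (R + 1))"
  have s: "s > 0" unfolding s_def using m R by simp
  have s2: "s\<^sup>2 = cmod (A_inner A a b) / (R + 1)" unfolding s_def using m R by simp
  have "2 * cmod (A_inner A a b) \<le> s\<^sup>2 * R" using amgm_s[OF pos s, of a b] z R_def by simp
  also have "\<dots> = cmod (A_inner A a b) * (R / (R + 1))" unfolding s2 by simp
  also have "\<dots> \<le> cmod (A_inner A a b) * 1"
    using m R by (intro mult_left_mono) auto
  finally show False using m by simp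
qed

lemma zero_left:
  assumes pos: "positive_op A" and z: "Re (A_inner A a a) = 0"
  shows "A_inner A a b = 0"
  using zero_right[OF pos z, of b] herm[OF pos, of a b] by simp

lemma exunit:
  assumes pos: "positive_op A" and nz: "A \<noteq> (\<lambda>x. 0)"
  shows "\<exists>x. Re (A_inner A x x) = 1"
proof -
  obtain x0 where x0: "A x0 \<noteq> 0" using nz by auto
  have "\<exists>x. Re (A_inner A x x) > 0"
  proof (rule ccontr)
    assume "\<not> ?thesis"
    then have "\<forall>x. Re (A_inner A x x) = 0" using f_Re[OF pos] by (metis less_eq_real_def)
    then have "A_inner A x0 (A x0) = 0" using zero_left[OF pos] by blast
    then have "cinner (A x0) (A x0) = 0" by (simp add: A_inner_def)
    then show False using x0 cinner_eq_zero_iff by blast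
  qed
  then obtain x where x: "Re (A_inner A x x) > 0" by blast
  define r where "r = Re (A_inner A x x)"
  have "Re (A_inner A (complex_of_real (1 / sqrt r) *\<^sub>C x) (complex_of_real (1 / sqrt r) *\<^sub>C x)) = 1"
    using x by (simp add: fsimps pos r_def[symmetric] real_sqrt_mult[symmetric])
  then show ?thesis by blast
qed

definition clin :: "('a::complex_inner \<Rightarrow> 'a) \<Rightarrow> bool" where
  "clin P \<longleftrightarrow> (\<forall>x y. P (x + y) = P x + P y) \<and> (\<forall>c x. P (c *\<^sub>C x) = c *\<^sub>C P x)"

definition bndA :: "('a::complex_inner \<Rightarrow> 'a) \<Rightarrow> ('a \<Rightarrow> 'a) \<Rightarrow> bool" where
  "bndA A P \<longleftrightarrow> (\<exists>K. \<forall>x. Re (A_inner A x x) = 1 \<longrightarrow> cmod (A_inner A (P x) x) \<le> K)"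

lemma omega_set: "{cmod (A_inner A (T x) x) | x. A_norm A x = 1}
   = {cmod (A_inner A (T x) x) | x. Re (A_inner A x x) = 1}"
  by (simp add: A_norm_def)

lemma omega_upper:
  assumes "bndA A P" "Re (A_inner A u u) = 1"
  shows "cmod (A_inner A (P u) u) \<le> omega_A A P"
proof -
  obtain K where K: "\<forall>x. Re (A_inner A x x) = 1 \<longrightarrow> cmod (A_inner A (P x) x) \<le> K"
    using assms(1) bndA_def by blast
  have "bdd_above {cmod (A_inner A (P x) x) | x. Re (A_inner A x x) = 1}"
    using K by (auto intro!: bdd_aboveI[of _ K])
  then show ?thesis unfolding omega_A_def omega_set using assms(2)
    by (intro cSup_upper) auto
qed

lemma omega_least:
  assumes pos: "positive_op A" and nz: "A \<noteq> (\<lambda>x. 0)"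
    and K: "\<And>u. Re (A_inner A u u) = 1 \<Longrightarrow> cmod (A_inner A (P u) u) \<le> K"
  shows "omega_A A P \<le> K"
  unfolding omega_A_def omega_set
  using exunit[OF pos nz] K by (intro cSup_least) auto

lemma omega_ineq:
  assumes pos: "positive_op A" and "clin P" "bndA A P"
  shows "cmod (A_inner A (P u) u) \<le> omega_A A P * Re (A_inner A u u)"
proof (cases "Re (A_inner A u u) = 0")
  case True
  then show ?thesis using zero_right[OF pos True] by simp
next
  case False
  define r where "r = Re (A_inner A u u)"
  have r: "r > 0" using False f_Re[OF pos, of u] r_def by simp
  define w where "w = complex_of_real (1 / sqrt r) *\<^sub>C u"
  have w1: "Re (A_inner A w w) = 1"
    using r by (simp add: w_def fsimps pos r_def[symmetric] real_sqrt_mult[symmetric])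
  have "A_inner A (P w) w = A_inner A (P u) u / complex_of_real r"
    using assms(2) r unfolding w_def clin_def
    by (simp add: fsimps pos real_sqrt_mult[symmetric] of_real_mult[symmetric] del: of_real_mult)
  then have "cmod (A_inner A (P u) u) / r \<le> omega_A A P"
    using omega_upper[OF assms(3) w1] r by (simp add: norm_divide)
  then show ?thesis using r r_def by (simp add: field_simps)
qed

lemma main_gen:
  assumes pos: "positive_op A" and nz: "A \<noteq> (\<lambda>x. 0)"
    and cP: "clin P" and cQ: "clin Q" and bP: "bndA A P" and bQ: "bndA A Q"
    and a: "\<And>p. \<exists>u v. AA_inner A (M p) p = A_inner A (P u) u + A_inner A (Q v) v
              \<and> Re (AA_inner A p p) = Re (A_inner A u u) + Re (A_inner A v v)"
    and eP: "\<And>u. Re (A_inner A u u) = 1 \<Longrightarrow> \<exists>p. Re (AA_inner A p p) = 1 \<and> AA_inner A (M p) p = A_inner A (P u) u"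
    and eQ: "\<And>u. Re (A_inner A u u) = 1 \<Longrightarrow> \<exists>p. Re (AA_inner A p p) = 1 \<and> AA_inner A (M p) p = A_inner A (Q u) u"
  shows "omega_AA A M = max (omega_A A P) (omega_A A Q)"
proof -
  define m where "m = max (omega_A A P) (omega_A A Q)"
  define SS where "SS = {cmod (AA_inner A (M p) p) | p. Re (AA_inner A p p) = 1}"
  have om: "omega_AA A M = Sup SS" unfolding omega_AA_def SS_def AA_norm_def by simp
  have ub: "cmod (AA_inner A (M p) p) \<le> m" if p: "Re (AA_inner A p p) = 1" for p
  proof -
    obtain u v where uv: "AA_inner A (M p) p = A_inner A (P u) u + A_inner A (Q v) v"
      "Re (AA_inner A p p) = Re (A_inner A u u) + Re (A_inner A v v)" using a by blast
    have "cmod (AA_inner A (M p) p) \<le> cmod (A_inner A (P u) u) + cmod (A_inner A (Q v) v)"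
      unfolding uv(1) by (rule norm_triangle_ineq)
    also have "\<dots> \<le> omega_A A P * Re (A_inner A u u) + omega_A A Q * Re (A_inner A v v)"
      by (intro add_mono omega_ineq[OF pos cP bP] omega_ineq[OF pos cQ bQ])
    also have "\<dots> \<le> m * Re (A_inner A u u) + m * Re (A_inner A v v)"
      unfolding m_def by (intro add_mono mult_right_mono f_Re[OF pos]) auto
    also have "\<dots> = m * (Re (A_inner A u u) + Re (A_inner A v v))" by (simp add: algebra_simps)
    also have "\<dots> = m" using uv(2) p by simp
    finally show ?thesis .
  qed
  obtain u0 where u0: "Re (A_inner A u0 u0) = 1" using exunit[OF pos nz] by blast
  have ne: "SS \<noteq> {}" using eP[OF u0] unfolding SS_def by blast
  have bdd: "bdd_above SS" unfolding SS_def using ub by (auto intro!: bdd_aboveI[of _ m])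
  have le1: "Sup SS \<le> m" using ne ub unfolding SS_def by (intro cSup_least) auto
  have le2: "omega_A A P \<le> Sup SS"
  proof (rule omega_least[OF pos nz])
    fix u assume "Re (A_inner A u u) = 1"
    then obtain p where pp: "Re (AA_inner A p p) = 1" "AA_inner A (M p) p = A_inner A (P u) u" using eP by blast
    have "cmod (A_inner A (P u) u) \<in> SS" unfolding SS_def by (intro CollectI exI[of _ p]) (simp add: pp)
    then show "cmod (A_inner A (P u) u) \<le> Sup SS" using bdd by (rule cSup_upper)
  qed
  have le3: "omega_A A Q \<le> Sup SS"
  proof (rule omega_least[OF pos nz])
    fix u assume "Re (A_inner A u u) = 1"
    then obtain p where pp: "Re (AA_inner A p p) = 1" "AA_inner A (M p) p = A_inner A (Q u) u" using eQ by blast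
    have "cmod (A_inner A (Q u) u) \<in> SS" unfolding SS_def by (intro CollectI exI[of _ p]) (simp add: pp)
    then show "cmod (A_inner A (Q u) u) \<le> Sup SS" using bdd by (rule cSup_upper)
  qed
  show ?thesis unfolding om using le1 le2 le3 m_def by simp
qed


lemma clin_bcl: "bounded_clinear T \<Longrightarrow> clin T"
  unfolding bounded_clinear_def clin_def by blast

lemma clin_comb: "clin T \<Longrightarrow> clin S \<Longrightarrow> clin (\<lambda>x. T x + d *\<^sub>C S x)"
  unfolding clin_def by (simp add: scaleC_add_right scaleC_scaleC mult.commute add_ac)

lemma bndA_B:
  assumes pos: "positive_op A" and T: "T \<in> B_A_half A"
  shows "bndA A T"
proof -
  obtain c where c: "c > 0" "\<forall>x. A_norm A (T x) \<le> c * A_norm A x" using T B_A_half_def by blast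
  have "cmod (A_inner A (T x) x) \<le> (c\<^sup>2 + 1) / 2" if x: "Re (A_inner A x x) = 1" for x
  proof -
    have "A_norm A x = 1" using x by (simp add: A_norm_def)
    then have "A_norm A (T x) \<le> c" using c(2) by (metis mult_1_right)
    then have "sqrt (Re (A_inner A (T x) (T x))) \<le> c" by (simp add: A_norm_def)
    then have "Re (A_inner A (T x) (T x)) \<le> c\<^sup>2"
      using f_Re[OF pos, of "T x"] c(1) by (metis real_le_lsqrt real_sqrt_le_iff less_imp_le real_sqrt_le_mono sqrt_le_D)
    then show ?thesis using amgm[OF pos, of "T x" x] x by simp
  qed
  then show ?thesis unfolding bndA_def by blast
qed

lemma bndA_comb:
  assumes pos: "positive_op A" and "bndA A T" "bndA A S"
  shows "bndA A (\<lambda>x. T x + d *\<^sub>C S x)"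
proof -
  obtain K1 K2 where K: "\<forall>x. Re (A_inner A x x) = 1 \<longrightarrow> cmod (A_inner A (T x) x) \<le> K1"
    "\<forall>x. Re (A_inner A x x) = 1 \<longrightarrow> cmod (A_inner A (S x) x) \<le> K2"
    using assms bndA_def by metis
  have "cmod (A_inner A (T x + d *\<^sub>C S x) x) \<le> K1 + cmod d * K2" if x: "Re (A_inner A x x) = 1" for x
  proof -
    have "cmod (A_inner A (T x + d *\<^sub>C S x) x) = cmod (A_inner A (T x) x + d * A_inner A (S x) x)"
      by (simp add: fsimps pos)
    also have "\<dots> \<le> cmod (A_inner A (T x) x) + cmod d * cmod (A_inner A (S x) x)"
      by (metis norm_triangle_ineq norm_mult)
    also have "\<dots> \<le> K1 + cmod d * K2" using K x by (intro add_mono mult_left_mono) auto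
    finally show ?thesis .
  qed
  then show ?thesis unfolding bndA_def by blast
qed

theorem lemma2p5:
  fixes A T S :: "'a::chilbert_space \<Rightarrow> 'a"
  assumes "positive_op A" and "A \<noteq> (\<lambda>x. 0)"
    and "T \<in> B_A_half A" and "S \<in> B_A_half A"
  shows "omega_AA A (block_op T S S T) =
           max (omega_A A (\<lambda>x. T x + S x)) (omega_A A (\<lambda>x. T x - S x)) \<and>
         omega_AA A (block_op T (\<lambda>x. - S x) S T) =
           max (omega_A A (\<lambda>x. T x + \<i> *\<^sub>C S x)) (omega_A A (\<lambda>x. T x - \<i> *\<^sub>C S x))"
proof -
  note pos = assms(1) and nz = assms(2)
  have cT: "clin T" and cS: "clin S" using assms(3,4) clin_bcl B_A_half_def by auto
  have bT: "bndA A T" and bS: "bndA A S" using bndA_B pos assms(3,4) by auto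
  have T1: "T (a + b) = T a + T b" "T (k *\<^sub>C a) = k *\<^sub>C T a" for a b k using cT unfolding clin_def by auto
  have S1: "S (a + b) = S a + S b" "S (k *\<^sub>C a) = k *\<^sub>C S a" for a b k using cS unfolding clin_def by auto
  define c where "c = complex_of_real (1 / sqrt 2)"
  have cc: "c * c = 1/2" unfolding c_def
    by (metis of_real_mult of_real_divide of_real_1 of_real_numeral real_sqrt_mult_self real_sqrt_pow2 divide_divide_eq_left' mult_1 power2_eq_square times_divide_times_eq zero_le_numeral)
  have cj: "cnj c = c" unfolding c_def by simp
  have ii: "\<i> * \<i> = (-1::complex)" by simp
  have e1: "(\<lambda>x. T x + S x) = (\<lambda>x. T x + 1 *\<^sub>C S x)" by (simp add: scaleC_one)
  have e2: "(\<lambda>x. T x - S x) = (\<lambda>x. T x + (-1) *\<^sub>C S x)" by (simp add: diff_scaleC)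
  have e3: "(\<lambda>x. T x - \<i> *\<^sub>C S x) = (\<lambda>x. T x + (-\<i>) *\<^sub>C S x)" by (simp add: diff_scaleC scaleC_scaleC)
  have cl: "clin (\<lambda>x. T x + d *\<^sub>C S x)" for d by (rule clin_comb[OF cT cS])
  have bd: "bndA A (\<lambda>x. T x + d *\<^sub>C S x)" for d by (rule bndA_comb[OF pos bT bS])
  have part1: "omega_AA A (block_op T S S T) =
           max (omega_A A (\<lambda>x. T x + S x)) (omega_A A (\<lambda>x. T x - S x))"
  proof (rule main_gen[OF pos nz])
    show "clin (\<lambda>x. T x + S x)" "clin (\<lambda>x. T x - S x)" "bndA A (\<lambda>x. T x + S x)" "bndA A (\<lambda>x. T x - S x)"
      unfolding e1 e2 by (rule cl bd)+
  next
    fix p :: "'a \<times> 'a"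
    obtain x y where p: "p = (x, y)" by fastforce
    define u where "u = c *\<^sub>C (x + y)"
    define v where "v = c *\<^sub>C (x - y)"
    have 1: "AA_inner A (block_op T S S T p) p = A_inner A (T u + S u) u + A_inner A (T v - S v) v"
      unfolding p u_def v_def
      apply (simp add: AA_inner_def block_op_def diff_scaleC T1 S1 fsimps pos cj)
      using cc ii by algebra
    have 2: "AA_inner A p p = A_inner A u u + A_inner A v v"
      unfolding p u_def v_def
      apply (simp add: AA_inner_def diff_scaleC fsimps pos cj)
      using cc ii by algebra
    show "\<exists>u v. AA_inner A (block_op T S S T p) p = A_inner A (T u + S u) u + A_inner A (T v - S v) v
              \<and> Re (AA_inner A p p) = Re (A_inner A u u) + Re (A_inner A v v)"
      using 1 2 by auto
  next
    fix u assume u: "Re (A_inner A u u) = 1"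
    define p where "p = (c *\<^sub>C u, c *\<^sub>C u)"
    have 1: "AA_inner A (block_op T S S T p) p = A_inner A (T u + S u) u"
      unfolding p_def
      apply (simp add: AA_inner_def block_op_def diff_scaleC T1 S1 fsimps pos cj)
      using cc ii by algebra
    have 2: "AA_inner A p p = A_inner A u u"
      unfolding p_def
      apply (simp add: AA_inner_def diff_scaleC fsimps pos cj)
      using cc ii by algebra
    show "\<exists>p. Re (AA_inner A p p) = 1 \<and> AA_inner A (block_op T S S T p) p = A_inner A (T u + S u) u"
      using 1 2 u by (intro exI[of _ p] conjI) simp_all
  next
    fix u assume u: "Re (A_inner A u u) = 1"
    define p where "p = (c *\<^sub>C u, (-c) *\<^sub>C u)"
    have 1: "AA_inner A (block_op T S S T p) p = A_inner A (T u - S u) u"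
      unfolding p_def
      apply (simp add: AA_inner_def block_op_def diff_scaleC T1 S1 fsimps pos cj)
      using cc ii by algebra
    have 2: "AA_inner A p p = A_inner A u u"
      unfolding p_def
      apply (simp add: AA_inner_def diff_scaleC fsimps pos cj)
      using cc ii by algebra
    show "\<exists>p. Re (AA_inner A p p) = 1 \<and> AA_inner A (block_op T S S T p) p = A_inner A (T u - S u) u"
      using 1 2 u by (intro exI[of _ p] conjI) simp_all
  qed
  have part2: "omega_AA A (block_op T (\<lambda>x. - S x) S T) =
           max (omega_A A (\<lambda>x. T x + \<i> *\<^sub>C S x)) (omega_A A (\<lambda>x. T x - \<i> *\<^sub>C S x))"
  proof (rule main_gen[OF pos nz])
    show "clin (\<lambda>x. T x + \<i> *\<^sub>C S x)" "clin (\<lambda>x. T x - \<i> *\<^sub>C S x)"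
      "bndA A (\<lambda>x. T x + \<i> *\<^sub>C S x)" "bndA A (\<lambda>x. T x - \<i> *\<^sub>C S x)"
      unfolding e3 by (rule cl bd)+
  next
    fix p :: "'a \<times> 'a"
    obtain x y where p: "p = (x, y)" by fastforce
    define u where "u = c *\<^sub>C (x + \<i> *\<^sub>C y)"
    define v where "v = c *\<^sub>C (x - \<i> *\<^sub>C y)"
    have 1: "AA_inner A (block_op T (\<lambda>x. - S x) S T p) p
       = A_inner A (T u + \<i> *\<^sub>C S u) u + A_inner A (T v - \<i> *\<^sub>C S v) v"
      unfolding p u_def v_def
      apply (simp add: AA_inner_def block_op_def diff_scaleC scaleC_minus1 T1 S1 fsimps pos cj)
      using cc ii by algebra
    have 2: "AA_inner A p p = A_inner A u u + A_inner A v v"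
      unfolding p u_def v_def
      apply (simp add: AA_inner_def diff_scaleC fsimps pos cj)
      using cc ii by algebra
    show "\<exists>u v. AA_inner A (block_op T (\<lambda>x. - S x) S T p) p
       = A_inner A (T u + \<i> *\<^sub>C S u) u + A_inner A (T v - \<i> *\<^sub>C S v) v
              \<and> Re (AA_inner A p p) = Re (A_inner A u u) + Re (A_inner A v v)"
      using 1 2 by auto
  next
    fix u assume u: "Re (A_inner A u u) = 1"
    define p where "p = (c *\<^sub>C u, (- \<i> * c) *\<^sub>C u)"
    have 1: "AA_inner A (block_op T (\<lambda>x. - S x) S T p) p = A_inner A (T u + \<i> *\<^sub>C S u) u"
      unfolding p_def
      apply (simp add: AA_inner_def block_op_def diff_scaleC scaleC_minus1 T1 S1 fsimps pos cj)
      using cc ii by algebra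
    have 2: "AA_inner A p p = A_inner A u u"
      unfolding p_def
      apply (simp add: AA_inner_def diff_scaleC fsimps pos cj)
      using cc ii by algebra
    show "\<exists>p. Re (AA_inner A p p) = 1 \<and> AA_inner A (block_op T (\<lambda>x. - S x) S T p) p = A_inner A (T u + \<i> *\<^sub>C S u) u"
      using 1 2 u by (intro exI[of _ p] conjI) simp_all
  next
    fix u assume u: "Re (A_inner A u u) = 1"
    define p where "p = (c *\<^sub>C u, (\<i> * c) *\<^sub>C u)"
    have 1: "AA_inner A (block_op T (\<lambda>x. - S x) S T p) p = A_inner A (T u - \<i> *\<^sub>C S u) u"
      unfolding p_def
      apply (simp add: AA_inner_def block_op_def diff_scaleC scaleC_minus1 T1 S1 fsimps pos cj)
      using cc ii by algebra
    have 2: "AA_inner A p p = A_inner A u u"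
      unfolding p_def
      apply (simp add: AA_inner_def diff_scaleC fsimps pos cj)
      using cc ii by algebra
    show "\<exists>p. Re (AA_inner A p p) = 1 \<and> AA_inner A (block_op T (\<lambda>x. - S x) S T p) p = A_inner A (T u - \<i> *\<^sub>C S u) u"
      using 1 2 u by (intro exI[of _ p] conjI) simp_all
  qed
  show ?thesis using part1 part2 by blast
qed
end
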